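(* Let $N = q^k n^2$ be an odd perfect number given in Eulerian form. Then $$I(n) > \left(\frac{8}{5}\right)^{\frac{\ln(4/3)}{\ln(13/9)}} \approx 1.44440557.$$
   Context: For a positive integer $x$, $\sigma(x)$ denotes the sum of the positive divisors of $x$, and $I(x) = \sigma(x)/x$ is the abundancy index. A positive integer $N$ is perfect if $\sigma(N) = 2N$. An odd perfect number $N$ is said to be given in Eulerian form if $N = q^k n^2$ where $q$ is a prime, $q \equiv k \equiv 1 \pmod 4$, $n$ is a positive integer, and $\gcd(q,n) = 1$. *)

theory Defs
  imports "HOL-Analysis.Analysis" "HOL-Computational_Algebra.Primes"
begin

definition sigma :: "nat \<Rightarrow> nat" where
  "sigma x = (\<Sum>d | d dvd x. d)"

definition abundancy :: "nat \<Rightarrow> real" where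
  "abundancy x = real (sigma x) / real x"

definition perfect :: "nat \<Rightarrow> bool" where
  "perfect N \<longleftrightarrow> N > 0 \<and> sigma N = 2 * N"

definition eulerian_form :: "nat \<Rightarrow> nat \<Rightarrow> nat \<Rightarrow> nat \<Rightarrow> bool" where
  "eulerian_form N q k n \<longleftrightarrow>
     N = q ^ k * n ^ 2 \<and> prime q \<and> q mod 4 = 1 \<and> k mod 4 = 1 \<and> n > 0 \<and> coprime q n"

end

theory Submission
  imports Defs
begin

lemma bern:
  fixes x c :: real
  assumes "x \<ge> 1" "c \<ge> 1"
  shows "1 + c * (x - 1) \<le> x powr c"
proof -
  have "x powr c - 1 powr c \<ge> (c * 1 powr (c - 1)) * (x - 1)"
  proof (rule convex_on_imp_above_tangent[where A="{0<..}"])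
    show "convex_on {0<..} (\<lambda>x. x powr c)" using powr_convex assms by blast
    show "connected ({0<..} :: real set)" by simp
    show "(1::real) \<in> interior {0<..}" by (simp add: interior_open)
    show "x \<in> {0<..}" using assms by simp
    show "((\<lambda>x. x powr c) has_field_derivative c * 1 powr (c - 1)) (at 1 within {0<..})"
      by (rule has_field_derivative_at_within, rule has_real_derivative_powr) simp
  qed
  then show ?thesis by simp
qed

lemma sigma_mult:
  assumes "coprime a b" "a > 0" "b > 0"
  shows "sigma (a * b) = sigma a * sigma b"
proof -
  let ?A = "{d. d dvd a}" and ?B = "{d. d dvd b}"
  have fA: "finite ?A" using assms by simp
  have fB: "finite ?B" using assms by simp
  have "sigma a * sigma b = (\<Sum>d1\<in>?A. \<Sum>d2\<in>?B. d1 * d2)"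
    unfolding sigma_def by (simp add: sum_product)
  also have "\<dots> = (\<Sum>z\<in>?A \<times> ?B. fst z * snd z)"
    by (simp add: sum.cartesian_product case_prod_beta)
  also have "\<dots> = (\<Sum>d\<in>(\<lambda>z. fst z * snd z) ` (?A \<times> ?B). d)"
  proof (rule sum.reindex[symmetric, unfolded comp_def])
    show "inj_on (\<lambda>z. fst z * snd z) (?A \<times> ?B)"
    proof (rule inj_onI, clarify)
      fix d1 d2 e1 e2 :: nat
      assume h: "d1 dvd a" "d2 dvd b" "e1 dvd a" "e2 dvd b" "fst (d1, d2) * snd (d1, d2) = fst (e1, e2) * snd (e1, e2)"
      have c1: "coprime a d2" using coprime_divisors[OF dvd_refl h(2) assms(1)] .
      have c2: "coprime a e2" using coprime_divisors[OF dvd_refl h(4) assms(1)] .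
      have g1: "gcd (d1 * d2) a = d1"
        using gcd_mult_left_right_cancel[OF c1, of d1] h(1) by (simp add: gcd_nat.absorb1)
      have g2: "gcd (e1 * e2) a = e1"
        using gcd_mult_left_right_cancel[OF c2, of e1] h(3) by (simp add: gcd_nat.absorb1)
      have eq: "d1 * d2 = e1 * e2" using h(5) by simp
      have "d1 = e1" using g1 g2 eq by simp
      moreover have "d1 > 0" using h(1) assms(2) by (auto intro: Nat.gr0I)
      ultimately have "d2 = e2" using eq by simp
      with \<open>d1 = e1\<close> show "d1 = e1 \<and> d2 = e2" by simp
    qed
  qed
  also have "(\<lambda>z. fst z * snd z) ` (?A \<times> ?B) = {d. d dvd a * b}"
  proof (rule set_eqI, rule iffI)
    fix d assume "d \<in> (\<lambda>z. fst z * snd z) ` (?A \<times> ?B)"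
    then show "d \<in> {d. d dvd a * b}" by (auto intro: mult_dvd_mono)
  next
    fix d assume "d \<in> {d. d dvd a * b}"
    then obtain d1 d2 where "d = d1 * d2" "d1 dvd a" "d2 dvd b"
      using division_decomp by blast
    then show "d \<in> (\<lambda>z. fst z * snd z) ` (?A \<times> ?B)"
      by (intro image_eqI[of _ _ "(d1, d2)"]) auto
  qed
  finally show ?thesis unfolding sigma_def by simp
qed

lemma abundancy_mult:
  assumes "coprime a b" "a > 0" "b > 0"
  shows "abundancy (a * b) = abundancy a * abundancy b"
  unfolding abundancy_def using sigma_mult[OF assms] by simp

lemma sigma_pp:
  assumes "prime p"
  shows "sigma (p ^ a) = (\<Sum>i\<le>a. p ^ i)"
proof -
  have "{d. d dvd p ^ a} = (\<lambda>i. p ^ i) ` {..a}"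
    using divides_primepow_nat[OF assms] by auto
  moreover have "inj_on (\<lambda>i. p ^ i) {..a}"
    using assms prime_gt_1_nat by (auto intro!: inj_onI simp: power_inject_exp)
  ultimately show ?thesis unfolding sigma_def by (simp add: sum.reindex)
qed

lemma abundancy_pp:
  assumes "prime p"
  shows "abundancy (p ^ a) = (real p * real p ^ a - 1) / (real p ^ a * (real p - 1))"
proof -
  have p1: "real p > 1" using prime_gt_1_nat[OF assms] by simp
  have "real (sigma (p ^ a)) = (\<Sum>i<Suc a. real p ^ i)"
    using sigma_pp[OF assms] by (simp add: lessThan_Suc_atMost)
  also have "\<dots> = (real p ^ Suc a - 1) / (real p - 1)"
    by (rule geometric_sum) (use p1 in simp)
  finally have h: "real (sigma (p ^ a)) = (real p * real p ^ a - 1) / (real p - 1)" by simp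
  show ?thesis unfolding abundancy_def h by (simp add: divide_divide_eq_left mult.commute)
qed

definition cc :: real where "cc = ln (13/9) / ln (4/3)"

lemma cc_ge: "cc \<ge> 6/5"
proof -
  have "ln ((4/3::real)^6) \<le> ln ((13/9)^5)"
    by (subst ln_le_cancel_iff; simp add: power_divide)
  then have "6 * ln (4/3::real) \<le> 5 * ln (13/9)"
    by (simp add: ln_realpow)
  moreover have "ln (4/3::real) > 0" by simp
  ultimately show ?thesis unfolding cc_def by (simp add: field_simps)
qed

lemma pp_ineq:
  assumes "prime p" "odd p"
  shows "abundancy (p ^ (2*a)) \<le> abundancy (p ^ a) powr cc"
proof (cases "a = 0")
  case True
  then show ?thesis by (simp add: abundancy_def sigma_def)
next
  case False
  have p3: "p \<ge> 3" using prime_ge_2_nat[OF assms(1)] assms(2) by (cases "p = 2") auto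
  show ?thesis
  proof (cases "p = 3 \<and> a = 1")
    case True
    have s9: "abundancy (3 ^ 2) = 13 / 9" using abundancy_pp[of 3 2] by simp
    have s3: "abundancy (3 ^ 1) = 4 / 3" using abundancy_pp[of 3 1] by simp
    have "(4/3::real) powr cc = exp (ln (4/3) * (ln (13/9) / ln (4/3)))"
      unfolding cc_def powr_def by (simp add: mult.commute)
    also have "\<dots> = 13/9" by simp
    finally have e: "(4/3::real) powr cc = 13/9" .
    have h1: "p ^ (2*a) = 3^2" and h2: "p ^ a = 3^1" using True by auto
    have "abundancy (p^(2*a)) = abundancy (3^2)" using h1 by (simp only:)
    also have "\<dots> = 13/9" by (rule s9)
    also have "\<dots> = (4/3) powr cc" by (rule e[symmetric])
    also have "\<dots> = abundancy (3^1) powr cc" by (simp only: s3)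
    also have "\<dots> = abundancy (p^a) powr cc" using h2 by (simp only:)
    finally show ?thesis by simp
  next
    case False2: False
    define P where "P = real p ^ a"
    have P5: "P \<ge> 5"
    proof (cases "p = 3")
      case True
      with False2 \<open>a \<noteq> 0\<close> have "a \<ge> 2" by simp
      then have "(3::real)^2 \<le> 3 ^ a" by (rule power_increasing) simp
      then show ?thesis using True unfolding P_def by simp
    next
      case False
      with p3 assms(2) have "p \<ge> 5" by presburger
      then have "real p \<ge> 5" by simp
      moreover have "real p ^ 1 \<le> real p ^ a" using \<open>a \<noteq> 0\<close> p3
        by (intro power_increasing) auto
      ultimately show ?thesis unfolding P_def by (simp only: power_one_right)
    qed
    have pr: "real p \<ge> 3" using p3 by simp
    define x where "x = abundancy (p ^ a)"
    have x: "x = (real p * P - 1) / (P * (real p - 1))"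
      unfolding x_def P_def using abundancy_pp[OF assms(1)] by simp
    have y: "abundancy (p ^ (2*a)) = (real p * P^2 - 1) / (P^2 * (real p - 1))"
      unfolding P_def using abundancy_pp[OF assms(1), of "2*a"] by (simp add: power_mult mult.commute)
    have xm1: "x - 1 = (P - 1) / (P * (real p - 1))"
      using x P5 pr by (simp add: field_simps)
    have "0 \<le> (P - 1) / (P * (real p - 1))" using P5 pr by (intro divide_nonneg_nonneg) auto
    then have x1: "x \<ge> 1" using xm1 by linarith
    have yid: "abundancy (p ^ (2*a)) = 1 + (1 + 1/P) * (x - 1)"
      unfolding y x using P5 pr by (simp add: field_simps power2_eq_square)
    have "1/P \<le> 1/5" using P5 by (simp add: divide_simps)
    then have "1 + 1/P \<le> cc" using cc_ge by linarith
    then have "abundancy (p ^ (2*a)) \<le> 1 + cc * (x - 1)"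
      using yid x1 by (simp add: mult_right_mono)
    also have "\<dots> \<le> x powr cc" using bern x1 cc_ge by simp
    finally show ?thesis unfolding x_def .
  qed
qed

lemma abundancy_pos: "n > 0 \<Longrightarrow> abundancy n > 0"
proof -
  assume n: "n > 0"
  have "n \<le> sigma n" unfolding sigma_def
    by (rule member_le_sum) (use n in auto)
  then show ?thesis unfolding abundancy_def using n by simp
qed

lemma key:
  fixes n :: nat
  shows "n > 0 \<Longrightarrow> odd n \<Longrightarrow> abundancy (n^2) \<le> abundancy n powr cc"
proof (induction n rule: less_induct)
  case (less n)
  show ?case
  proof (cases "n = 1")
    case True
    then show ?thesis by (simp add: abundancy_def sigma_def)
  next
    case False
    obtain p where p: "prime p" "p dvd n" using False prime_factor_nat by blast
    define a where "a = multiplicity p n"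
    obtain m where m: "n = p ^ a * m" "\<not> p dvd m"
      using multiplicity_decompose'[of n p] less.prems p unfolding a_def
      by (metis not_prime_unit neq0_conv)
    have "a \<noteq> 0"
    proof
      assume "a = 0" with m p show False by simp
    qed
    have m0: "m > 0" using m less.prems by (metis gr0I mult_0_right)
    have cop: "coprime (p ^ a) m" using prime_imp_coprime[OF p(1) m(2)] by simp
    have pa: "p ^ a > 1" using \<open>a \<noteq> 0\<close> prime_gt_1_nat[OF p(1)] one_less_power by blast
    have mn: "m < n" using m pa m0 by simp
    have modd: "odd m" using m less.prems by simp
    have podd: "odd p" using p less.prems by (metis dvd_trans)
    have IH: "abundancy (m^2) \<le> abundancy m powr cc" using less.IH[OF mn m0 modd] .
    have "abundancy (n^2) = abundancy (p ^ (2*a)) * abundancy (m^2)"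
      using abundancy_mult[of "p^(2*a)" "m^2"] cop m0 p(1) m
      by (simp add: power_mult_distrib power_mult[symmetric] mult.commute prime_gt_0_nat)
    also have "\<dots> \<le> abundancy (p ^ a) powr cc * abundancy m powr cc"
      using pp_ineq[OF p(1) podd, of a] IH abundancy_pos[of "p^(2*a)"] prime_gt_0_nat[OF p(1)] abundancy_pos[of "m^2"] m0
      by (intro mult_mono) auto
    also have "\<dots> = abundancy n powr cc"
      using abundancy_mult[OF cop _ m0] m abundancy_pos[of "p^a"] abundancy_pos[OF m0]
        prime_gt_0_nat[OF p(1)] by (simp add: powr_mult)
    finally show ?thesis .
  qed
qed

theorem theorem1:
  fixes N q k n :: nat
  assumes "odd N" and "perfect N" and "eulerian_form N q k n"
  shows "abundancy n > (8/5 :: real) powr (ln (4/3) / ln (13/9))"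
proof -
  have N: "N = q ^ k * n ^ 2" "prime q" "q mod 4 = 1" "n > 0" "coprime q n"
    using assms(3) unfolding eulerian_form_def by auto
  have sN: "sigma N = 2 * N" "N > 0" using assms(2) unfolding perfect_def by auto
  have aN: "abundancy N = 2" using sN unfolding abundancy_def by simp
  have q0: "q > 0" using N prime_gt_0_nat by blast
  have q5: "q \<ge> 5"
  proof -
    have "q \<noteq> 1" using N(2) by auto
    then show ?thesis using N(3) prime_gt_1_nat[OF N(2)] by presburger
  qed
  have cop: "coprime (q ^ k) (n ^ 2)" using N(5) by simp
  have prod: "abundancy (q ^ k) * abundancy (n ^ 2) = 2"
    using abundancy_mult[OF cop] aN N(1) q0 N(4) by simp
  define Q where "Q = real q ^ k"
  have Q1: "Q \<ge> 1" unfolding Q_def using q0 by simp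
  have aq: "abundancy (q ^ k) = (real q * Q - 1) / (Q * (real q - 1))"
    unfolding Q_def using abundancy_pp[OF N(2)] by simp
  have rq: "real q \<ge> 5" using q5 by simp
  have "abundancy (q ^ k) < real q / (real q - 1)"
    unfolding aq using Q1 rq by (simp add: field_simps)
  also have "\<dots> \<le> 5/4" using rq by (simp add: field_simps)
  finally have aq54: "abundancy (q ^ k) < 5/4" .
  have aqpos: "abundancy (q ^ k) > 0" using abundancy_pos q0 by simp
  have an2: "abundancy (n ^ 2) > 8/5"
  proof -
    have "abundancy (n^2) = 2 / abundancy (q ^ k)" using prod aqpos by (simp add: field_simps)
    moreover have "2 / abundancy (q ^ k) > 2 / (5/4)"
      using aq54 aqpos by (intro divide_strict_left_mono) auto
    ultimately show ?thesis by simp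
  qed
  have nodd: "odd n" using assms(1) N(1) by (simp add: N(4))
  have "8/5 < abundancy n powr cc" using key[OF N(4) nodd] an2 by simp
  then have "(8/5) powr (ln (4/3) / ln (13/9)) < (abundancy n powr cc) powr (ln (4/3) / ln (13/9))"
    by (intro powr_less_mono2) auto
  also have "\<dots> = abundancy n"
  proof -
    have "cc * (ln (4/3) / ln (13/9)) = 1" unfolding cc_def by simp
    then show ?thesis using abundancy_pos[OF N(4)] cc_ge by (simp add: powr_powr)
  qed
  finally show ?thesis .
qed

end
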